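(* Let $n\ge3$, $2\le i\le n-1$, $\mathfrak g=\mathfrak{sp}(n,\mathbb C)$ and $\mathfrak q=\mathfrak l\oplus\mathfrak n$ the maximal parabolic subalgebra of type $C_n(i)$. Let $V(\mu+\epsilon_\gamma)$ be the irreducible $\mathfrak l$-submodule of $\mathfrak l_\gamma\otimes\mathfrak z(\mathfrak n)$ with highest weight $\varepsilon_1+\varepsilon_2$. Then the $\mathfrak l$-intertwining operator $\tilde\tau_2|_{V(\mu+\epsilon_\gamma)^*}:V(\mu+\epsilon_\gamma)^*\to\mathcal P^2(\mathfrak g(1))$ is not identically zero.
   Context: $\mathfrak g=\mathfrak{sp}(n,\mathbb C)$ (rank $n$) with Cartan $\mathfrak h$, roots $\pm\varepsilon_j\pm\varepsilon_k$ ($j<k$), $\pm2\varepsilon_j$, simple roots $\alpha_j=\varepsilon_j-\varepsilon_{j+1}$ ($j<n$), $\alpha_n=2\varepsilon_n$, Killing form $\kappa$, root vectors $X_\alpha$. $\mathfrak q=\mathfrak l\oplus\mathfrak n$ is the standard maximal parabolic subalgebra determined by $\alpha_i$ ($\mathfrak l$ = $\mathfrak h$ plus root spaces of roots in the span of $\Pi\setminus\{\alpha_i\}$); grading $\mathfrak g=\bigoplus_{j=-2}^2\mathfrak g(j)$ by the $\alpha_i$-coefficient, $\mathfrak l=\mathfrak g(0)$, $\Delta(\mathfrak g(1))=\{\varepsilon_j\pm\varepsilon_k:1\le j\le i<k\le n\}$, $\mathfrak z(\mathfrak n)=\mathfrak g(2)$ with roots $\varepsilon_j+\varepsilon_k$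 ($j<k\le i$), $2\varepsilon_j$ ($j\le i$), $\mathfrak z(\bar{\mathfrak n})=\mathfrak g(-2)$. $\mathfrak l_\gamma\cong\mathfrak{sl}(i,\mathbb C)$ is the simple ideal of $[\mathfrak l,\mathfrak l]$ with simple roots $\alpha_1,\dots,\alpha_{i-1}$. (Here $\mu=\varepsilon_1+\varepsilon_{i+1}$ is the highest weight of $\mathfrak g(1)$ and $\epsilon_\gamma=\varepsilon_2-\varepsilon_{i+1}$.) $\omega=\sum_{\gamma\in\Delta(\mathfrak z(\mathfrak n))}X^*_\gamma\otimes X_\gamma$ with $X^*_\gamma\in\mathfrak g_{-\gamma}$, $\kappa(X^*_\gamma,X_{\gamma'})=\delta_{\gamma\gamma'}$; $\tau_2(X)=\tfrac12(\mathrm{ad}(X)^2\otimes\mathrm{Id})\omega\in\mathfrak l\otimes\mathfrak z(\mathfrak n)$ for $X\in\mathfrak g(1)$. For an irreducible $\mathfrak l$-constituent $W$ of $\mathfrak l\otimes\mathfrak z(\mathfrak n)$, $W^*$ is realized in $\mathfrak l\otimes\mathfrak z(\bar{\mathfrak n})$ via $(A\otimes B)(C\otimes D)=\kappa(A,C)\kappa(B,D)$, and $\tilde\tau_2|_{W^*}(Y^* )(X)=Y^*(\tau_2(X))$, a homogeneous quadratic polynomial on $\mathfrak g(1)$. *)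

theory Defs
  imports Complex_Main
begin

text \<open>Concrete model of sp(n,C): 2n x 2n complex matrices (entries indexed by
  naturals, required to vanish outside the range 0..2n-1) X with X^T J + J X = 0,
  J = [[0,I],[-I,0]].  Row/column index a < n corresponds to e_(a+1), index n+a
  to f_(a+1).  The Cartan subalgebra is the diagonal part, eps_(j+1)(H) = H j j.\<close>

type_synonym cmat = "nat \<Rightarrow> nat \<Rightarrow> complex"
type_synonym tens = "nat \<Rightarrow> nat \<Rightarrow> nat \<Rightarrow> nat \<Rightarrow> complex"

definition mzero :: cmat where "mzero = (\<lambda>a b. 0)"
definition madd :: "cmat \<Rightarrow> cmat \<Rightarrow> cmat" where "madd A B = (\<lambda>a b. A a b + B a b)"
definition msmult :: "complex \<Rightarrow> cmat \<Rightarrow> cmat" where "msmult c A = (\<lambda>a b. c * A a b)"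
definition mtrans :: "cmat \<Rightarrow> cmat" where "mtrans A = (\<lambda>a b. A b a)"
definition mmult :: "nat \<Rightarrow> cmat \<Rightarrow> cmat \<Rightarrow> cmat" where
  "mmult n A B = (\<lambda>a b. \<Sum>e<2*n. A a e * B e b)"
definition brk :: "nat \<Rightarrow> cmat \<Rightarrow> cmat \<Rightarrow> cmat" where
  "brk n A B = (\<lambda>a b. mmult n A B a b - mmult n B A a b)"
definition mtrace :: "nat \<Rightarrow> cmat \<Rightarrow> complex" where
  "mtrace n A = (\<Sum>a<2*n. A a a)"
definition Emat :: "nat \<Rightarrow> nat \<Rightarrow> cmat" where
  "Emat p q = (\<lambda>a b. if a = p \<and> b = q then 1 else 0)"

definition Jform :: "nat \<Rightarrow> cmat" where
  "Jform n = (\<lambda>a b. if a < n \<and> b = a + n then 1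
                    else if n \<le> a \<and> a < 2*n \<and> b + n = a then -1 else 0)"

definition sp :: "nat \<Rightarrow> cmat set" where
  "sp n = {X. (\<forall>a b. (2*n \<le> a \<or> 2*n \<le> b) \<longrightarrow> X a b = 0) \<and>
              madd (mmult n (mtrans X) (Jform n)) (mmult n (Jform n) X) = mzero}"

text \<open>Killing form of sp(n,C): kappa(X,Y) = tr(ad X ad Y) = (2n+2) tr(XY).\<close>
definition killing :: "nat \<Rightarrow> cmat \<Rightarrow> cmat \<Rightarrow> complex" where
  "killing n X Y = of_nat (2*n+2) * mtrace n (mmult n X Y)"

definition cartan :: "nat \<Rightarrow> cmat set" where
  "cartan n = {H \<in> sp n. \<forall>a b. a \<noteq> b \<longrightarrow> H a b = 0}"

text \<open>Nilradical of the opposite standard Borel (span of negative root vectors for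
  the simple roots alpha_j = eps_j - eps_(j+1), alpha_n = 2 eps_n).\<close>
definition nbar_borel :: "nat \<Rightarrow> cmat set" where
  "nbar_borel n = {X \<in> sp n. (\<forall>a b. a < n \<and> n \<le> b \<longrightarrow> X a b = 0) \<and>
                               (\<forall>a b. a < n \<and> b < n \<and> a \<le> b \<longrightarrow> X a b = 0)}"

text \<open>Grading element for alpha_i: eps_j(H) = 1 for j \<le> i, 0 otherwise, so that
  ad(H) acts on a root space by the alpha_i-coefficient of the root.\<close>
definition Hgr :: "nat \<Rightarrow> nat \<Rightarrow> cmat" where
  "Hgr n i = (\<lambda>a b. if a = b \<and> a < i then 1
                    else if a = b \<and> n \<le> a \<and> a < n + i then -1 else 0)"

definition gdeg :: "nat \<Rightarrow> nat \<Rightarrow> int \<Rightarrow> cmat set" where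
  "gdeg n i k = {X \<in> sp n. brk n (Hgr n i) X = msmult (of_int k) X}"

definition levi :: "nat \<Rightarrow> nat \<Rightarrow> cmat set" where
  "levi n i = gdeg n i 0"

text \<open>Root vectors for the roots eps_(j+1) + eps_(k+1), j \<le> k < i, of z(n) = g(2)
  (for j = k this is the root 2 eps_(j+1)), and root vectors for their negatives.\<close>
definition Xroot :: "nat \<Rightarrow> nat \<Rightarrow> nat \<Rightarrow> cmat" where
  "Xroot n j k = madd (Emat j (n + k)) (Emat k (n + j))"
definition Yroot :: "nat \<Rightarrow> nat \<Rightarrow> nat \<Rightarrow> cmat" where
  "Yroot n j k = madd (Emat (n + j) k) (Emat (n + k) j)"
text \<open>X^*_gamma in g_(-gamma) normalised by kappa(X^*_gamma, X_gamma) = 1.\<close>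
definition Xstar :: "nat \<Rightarrow> nat \<Rightarrow> nat \<Rightarrow> cmat" where
  "Xstar n j k = msmult (1 / killing n (Yroot n j k) (Xroot n j k)) (Yroot n j k)"

text \<open>Tensors in gl(2n) \<otimes> gl(2n) as 4-index arrays; (A \<otimes> B) a b c d = A a b * B c d.\<close>
definition tp :: "cmat \<Rightarrow> cmat \<Rightarrow> tens" where
  "tp A B = (\<lambda>a b c d. A a b * B c d)"
definition tzero :: tens where "tzero = (\<lambda>a b c d. 0)"
definition tadd :: "tens \<Rightarrow> tens \<Rightarrow> tens" where
  "tadd S T = (\<lambda>a b c d. S a b c d + T a b c d)"
definition tsmult :: "complex \<Rightarrow> tens \<Rightarrow> tens" where
  "tsmult x T = (\<lambda>a b c d. x * T a b c d)"

inductive_set tspan :: "cmat set \<Rightarrow> cmat set \<Rightarrow> tens set" for U W where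
  tspan_zero: "tzero \<in> tspan U W"
| tspan_tp: "A \<in> U \<Longrightarrow> B \<in> W \<Longrightarrow> tp A B \<in> tspan U W"
| tspan_add: "S \<in> tspan U W \<Longrightarrow> T \<in> tspan U W \<Longrightarrow> tadd S T \<in> tspan U W"
| tspan_smult: "S \<in> tspan U W \<Longrightarrow> tsmult x S \<in> tspan U W"

text \<open>Adjoint action on tensors: Z.(A \<otimes> B) = [Z,A] \<otimes> B + A \<otimes> [Z,B].\<close>
definition tact :: "nat \<Rightarrow> cmat \<Rightarrow> tens \<Rightarrow> tens" where
  "tact n Z T = (\<lambda>a b c d. \<Sum>e<2*n.
      Z a e * T e b c d - T a e c d * Z e b + Z c e * T a b e d - T a b c e * Z e d)"

text \<open>Pairing (A \<otimes> B)(C \<otimes> D) = kappa(A,C) kappa(B,D), extended bilinearly.\<close>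
definition tpair :: "nat \<Rightarrow> tens \<Rightarrow> tens \<Rightarrow> complex" where
  "tpair n S T = (of_nat (2*n+2))^2 *
     (\<Sum>a<2*n. \<Sum>b<2*n. \<Sum>c<2*n. \<Sum>d<2*n. S a b c d * T b a d c)"

text \<open>tau_2(X) = 1/2 (ad(X)^2 \<otimes> Id) omega, omega = sum_gamma X^*_gamma \<otimes> X_gamma.\<close>
definition tau2 :: "nat \<Rightarrow> nat \<Rightarrow> cmat \<Rightarrow> tens" where
  "tau2 n i X = (\<lambda>a b c d. (1/2) * (\<Sum>(j,k) \<in> {(j,k). j \<le> k \<and> k < i}.
      tp (brk n X (brk n X (Xstar n j k))) (Xroot n j k) a b c d))"

inductive_set gen_submod :: "nat \<Rightarrow> cmat set \<Rightarrow> tens \<Rightarrow> tens set" for n L v where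
  gen_base: "v \<in> gen_submod n L v"
| gen_zero: "tzero \<in> gen_submod n L v"
| gen_act: "S \<in> gen_submod n L v \<Longrightarrow> Z \<in> L \<Longrightarrow> tact n Z S \<in> gen_submod n L v"
| gen_add: "S \<in> gen_submod n L v \<Longrightarrow> T \<in> gen_submod n L v \<Longrightarrow> tadd S T \<in> gen_submod n L v"
| gen_smult: "S \<in> gen_submod n L v \<Longrightarrow> tsmult x S \<in> gen_submod n L v"

text \<open>v is a lowest weight vector of weight -(eps_1 + eps_2) for l in l \<otimes> z(nbar);
  the l-submodule it generates is the realisation of V(mu + eps_gamma)^* inside
  l \<otimes> z(nbar) (this isotypic component has multiplicity one).\<close>
definition lowest_wt_vec :: "nat \<Rightarrow> nat \<Rightarrow> tens \<Rightarrow> bool" where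
  "lowest_wt_vec n i v \<longleftrightarrow>
     v \<in> tspan (levi n i) (gdeg n i (-2)) \<and> v \<noteq> tzero \<and>
     (\<forall>H \<in> cartan n. tact n H v = tsmult (- (H 0 0 + H 1 1)) v) \<and>
     (\<forall>Z \<in> levi n i \<inter> nbar_borel n. tact n Z v = tzero)"

end

theory Submission
  imports Defs "HOL-Library.Function_Algebras"
begin

lemma sum_fun_apply: "(\<Sum>a\<in>A. f a) x = (\<Sum>a\<in>A. f a x)"
  by (induct A rule: infinite_finite_induct) auto

lemma sum_if_eq1 [simp]: "(\<Sum>e<(N::nat). if e = q then f e else 0) = (if q < N then f q else (0::complex))"
  by (simp only: sum.delta[OF finite_lessThan] lessThan_iff)
lemma sum_if_eq2 [simp]: "(\<Sum>e<(N::nat). if q = e then f e else 0) = (if q < N then f q else (0::complex))"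
  by (simp only: sum.delta'[OF finite_lessThan] lessThan_iff)

lemma mmult_Emat_left: "mmult n (Emat p q) B = (\<lambda>a b. if a = p \<and> q < 2*n then B q b else 0)"
  unfolding mmult_def Emat_def by (rule ext)+ (auto simp: if_distrib[of "\<lambda>x. x * _"] cong: if_cong)

lemma mmult_Emat_right: "mmult n A (Emat p q) = (\<lambda>a b. if b = q \<and> p < 2*n then A a p else 0)"
  unfolding mmult_def Emat_def by (rule ext)+ (auto simp: if_distrib[of "\<lambda>x. _ * x"] cong: if_cong)

definition gr :: "nat \<Rightarrow> nat \<Rightarrow> nat \<Rightarrow> complex" where
  "gr n i x = (if x < i then 1 else if n \<le> x \<and> x < n + i then -1 else 0)"

lemma Hgr_alt: "Hgr n i a e = (if e = a then gr n i a else 0)"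
  unfolding Hgr_def gr_def by auto

lemma gr_out: "i \<le> n \<Longrightarrow> 2*n \<le> a \<Longrightarrow> gr n i a = 0"
  unfolding gr_def by auto

lemma mmult_Hgr_left: "i \<le> n \<Longrightarrow> mmult n (Hgr n i) X a b = gr n i a * X a b"
  unfolding mmult_def Hgr_alt by (auto simp: if_distrib[of "\<lambda>x. x * _"] gr_out cong: if_cong)

lemma mmult_Hgr_right: "i \<le> n \<Longrightarrow> mmult n X (Hgr n i) a b = X a b * gr n i b"
  unfolding mmult_def Hgr_alt by (auto simp: if_distrib[of "\<lambda>x. _ * x"] gr_out cong: if_cong)

lemma brk_Hgr: "i \<le> n \<Longrightarrow> brk n (Hgr n i) X a b = (gr n i a - gr n i b) * X a b"
  unfolding brk_def by (simp add: mmult_Hgr_left mmult_Hgr_right algebra_simps)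

definition spc :: "nat \<Rightarrow> cmat \<Rightarrow> nat \<Rightarrow> nat \<Rightarrow> complex" where
  "spc n X a b = (if n \<le> b \<and> b < 2*n then X (b-n) a else 0) - (if b < n then X (b+n) a else 0)
     + (if a < n then X (a+n) b else 0) - (if n \<le> a \<and> a < 2*n then X (a-n) b else 0)"

lemma J_col: "Jform n e b = (if e = b - n \<and> n \<le> b \<and> b < 2*n then 1 else 0) - (if e = b + n \<and> b < n then 1 else 0)"
  unfolding Jform_def by auto
lemma J_row: "Jform n a e = (if e = a + n \<and> a < n then 1 else 0) - (if e = a - n \<and> n \<le> a \<and> a < 2*n then 1 else 0)"
  unfolding Jform_def by auto

lemma sum_if_conj1 [simp]: "(\<Sum>e<(N::nat). if e = q \<and> P then f e else 0) = (if q < N \<and> P then f q else (0::complex))"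
  by (cases P) simp_all

lemma sp_form: "madd (mmult n (mtrans X) (Jform n)) (mmult n (Jform n) X) a b = spc n X a b"
proof -
  have 1: "(\<Sum>e<2*n. X e a * Jform n e b) = (if n \<le> b \<and> b < 2*n then X (b-n) a else 0) - (if b < n then X (b+n) a else 0)"
    unfolding J_col by (simp add: right_diff_distrib sum_subtractf if_distrib[of "\<lambda>x. _ * x"] cong: if_cong) auto
  have 2: "(\<Sum>e<2*n. Jform n a e * X e b) = (if a < n then X (a+n) b else 0) - (if n \<le> a \<and> a < 2*n then X (a-n) b else 0)"
    unfolding J_row by (simp add: left_diff_distrib sum_subtractf if_distrib[of "\<lambda>x. x * _"] cong: if_cong) auto
  show ?thesis unfolding madd_def mmult_def mtrans_def spc_def 1 2 by simp
qed

lemma sp_char: "X \<in> sp n \<longleftrightarrow> (\<forall>a b. (2*n \<le> a \<or> 2*n \<le> b) \<longrightarrow> X a b = 0) \<and> (\<forall>a b. spc n X a b = 0)"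
proof -
  have "madd (mmult n (mtrans X) (Jform n)) (mmult n (Jform n) X) = mzero \<longleftrightarrow> (\<forall>a b. spc n X a b = 0)"
    by (auto simp: fun_eq_iff sp_form[symmetric] mzero_def)
  then show ?thesis unfolding sp_def by auto
qed

lemma gdeg_char: "i \<le> n \<Longrightarrow> X \<in> gdeg n i k \<longleftrightarrow> X \<in> sp n \<and> (\<forall>a b. (gr n i a - gr n i b) * X a b = of_int k * X a b)"
  unfolding gdeg_def by (auto simp: fun_eq_iff brk_Hgr msmult_def)

lemma sp_out: "X \<in> sp n \<Longrightarrow> 2*n \<le> a \<or> 2*n \<le> b \<Longrightarrow> X a b = 0"
  unfolding sp_char by blast

lemma sp_nn: assumes "X \<in> sp n" "a < n" "b < n" shows "X (n+a) (n+b) = - X b a"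
proof -
  have "spc n X a (n+b) = 0" using assms unfolding sp_char by blast
  then show ?thesis using assms unfolding spc_def by (simp add: add.commute eq_neg_iff_add_eq_0)
qed

lemma sp_low: assumes "X \<in> sp n" "a < n" "b < n" shows "X (n+a) b = X (n+b) a"
proof -
  have "spc n X a b = 0" using assms unfolding sp_char by blast
  then show ?thesis using assms unfolding spc_def by (simp add: add.commute)
qed

lemma sp_up: assumes "X \<in> sp n" "a < n" "b < n" shows "X a (n+b) = X b (n+a)"
proof -
  have "spc n X (n+a) (n+b) = 0" using assms unfolding sp_char by blast
  then show ?thesis using assms unfolding spc_def by simp
qed

lemma sp_zero: "(\<lambda>a b. 0) \<in> sp n"
  unfolding sp_char spc_def by simp
lemma spc_add: "spc n (\<lambda>a b. X a b + Y a b) a b = spc n X a b + spc n Y a b"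
  unfolding spc_def by auto
lemma spc_smult: "spc n (\<lambda>a b. s * X a b) a b = s * spc n X a b"
  unfolding spc_def by (auto simp: algebra_simps)
lemma sp_add: "X \<in> sp n \<Longrightarrow> Y \<in> sp n \<Longrightarrow> (\<lambda>a b. X a b + Y a b) \<in> sp n"
  unfolding sp_char spc_add by auto
lemma sp_smult: "X \<in> sp n \<Longrightarrow> (\<lambda>a b. s * X a b) \<in> sp n"
  unfolding sp_char spc_smult by auto

lemma gdeg_zero: "i \<le> n \<Longrightarrow> (\<lambda>a b. 0) \<in> gdeg n i k"
  by (simp add: gdeg_char sp_zero)
lemma gdeg_add: "i \<le> n \<Longrightarrow> X \<in> gdeg n i k \<Longrightarrow> Y \<in> gdeg n i k \<Longrightarrow> (\<lambda>a b. X a b + Y a b) \<in> gdeg n i k"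
proof -
  assume a: "i \<le> n" "X \<in> gdeg n i k" "Y \<in> gdeg n i k"
  then have "X \<in> sp n" "Y \<in> sp n" "\<And>a b. (gr n i a - gr n i b) * X a b = of_int k * X a b"
     "\<And>a b. (gr n i a - gr n i b) * Y a b = of_int k * Y a b" by (simp_all only: gdeg_char)
  then show ?thesis using a(1) by (simp only: gdeg_char sp_add distrib_left) simp
qed
lemma gdeg_smult: "i \<le> n \<Longrightarrow> X \<in> gdeg n i k \<Longrightarrow> (\<lambda>a b. s * X a b) \<in> gdeg n i k"
  by (simp add: gdeg_char sp_smult)

lemma sp_char2: "X \<in> sp n \<longleftrightarrow> (\<forall>a b. (2*n \<le> a \<or> 2*n \<le> b) \<longrightarrow> X a b = 0) \<and>
   (\<forall>x<n. \<forall>y<n. X (n+x) y = X (n+y) x \<and> X x (n+y) = X y (n+x) \<and> X (n+x) (n+y) = - X y x)"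
proof
  assume "X \<in> sp n" then show "(\<forall>a b. (2*n \<le> a \<or> 2*n \<le> b) \<longrightarrow> X a b = 0) \<and>
   (\<forall>x<n. \<forall>y<n. X (n+x) y = X (n+y) x \<and> X x (n+y) = X y (n+x) \<and> X (n+x) (n+y) = - X y x)"
    using sp_out sp_low sp_up sp_nn by blast
next
  assume A: "(\<forall>a b. (2*n \<le> a \<or> 2*n \<le> b) \<longrightarrow> X a b = 0) \<and>
   (\<forall>x<n. \<forall>y<n. X (n+x) y = X (n+y) x \<and> X x (n+y) = X y (n+x) \<and> X (n+x) (n+y) = - X y x)"
  have "spc n X a b = 0" for a b
  proof (cases "2*n \<le> a \<or> 2*n \<le> b")
    case True then show ?thesis using A unfolding spc_def by auto
  next
    case False
    have ca: "a < n \<or> (\<exists>x. a = n + x \<and> x < n)" using False by presburger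
    have cb: "b < n \<or> (\<exists>y. b = n + y \<and> y < n)" using False by presburger
    from ca cb show ?thesis
    proof (elim disjE exE conjE)
      assume "a < n" "b < n" then show ?thesis using A unfolding spc_def by (auto simp: add.commute)
    next
      fix y assume h: "a < n" "b = n + y" "y < n"
      then have "X (a+n) (n+y) = - X y a" using A by (metis add.commute)
      then show ?thesis using h unfolding spc_def by auto
    next
      fix x assume h: "a = n + x" "x < n" "b < n"
      then have "X (b+n) (n+x) = - X x b" using A by (metis add.commute)
      then show ?thesis using h unfolding spc_def by auto
    next
      fix x y assume h: "a = n + x" "x < n" "b = n + y" "y < n"
      then have "X y (n+x) = X x (n+y)" using A by (metis add.commute)
      then show ?thesis using h unfolding spc_def by auto
    qed
  qed
  then show "X \<in> sp n" using A unfolding sp_char by blast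
qed

definition Mm :: "nat \<Rightarrow> nat \<Rightarrow> nat \<Rightarrow> cmat" where
  "Mm n p q = (\<lambda>a b. Emat p q a b - Emat (n+q) (n+p) a b)"

lemma Mm_sp: "p < n \<Longrightarrow> q < n \<Longrightarrow> Mm n p q \<in> sp n"
  unfolding sp_char2 Mm_def Emat_def by simp

lemma Yroot_ent: "Yroot n j k a b = (if a = n+j \<and> b = k then 1 else 0) + (if a = n+k \<and> b = j then 1 else 0)"
  unfolding Yroot_def madd_def Emat_def by (rule refl)
lemma Yroot_sp: "j < n \<Longrightarrow> k < n \<Longrightarrow> Yroot n j k \<in> sp n"
  unfolding sp_char2 
  apply (intro conjI allI impI)
  subgoal for a b unfolding Yroot_ent by (elim disjE; simp)
  subgoal for x y unfolding Yroot_ent by (cases "x=j"; cases "y=k"; cases "x=k"; cases "y=j"; simp)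
  subgoal for x y unfolding Yroot_ent by simp
  subgoal for x y unfolding Yroot_ent by simp
  done

lemma gdeg_elim: "i \<le> n \<Longrightarrow> X \<in> gdeg n i k \<Longrightarrow> X a b \<noteq> 0 \<Longrightarrow> gr n i a - gr n i b = of_int k"
  unfolding gdeg_char by (metis mult_right_cancel)

lemma gdeg_intro: "i \<le> n \<Longrightarrow> X \<in> sp n \<Longrightarrow> (\<And>a b. X a b \<noteq> 0 \<Longrightarrow> gr n i a - gr n i b = of_int k) \<Longrightarrow> X \<in> gdeg n i k"
  unfolding gdeg_char by (metis mult_eq_0_iff)
lemma Mm_nz: "Mm n p q a b \<noteq> 0 \<Longrightarrow> (a = p \<and> b = q) \<or> (a = n+q \<and> b = n+p)"
  unfolding Mm_def Emat_def by (auto split: if_splits)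
lemma Yroot_nz: "Yroot n j k a b \<noteq> 0 \<Longrightarrow> (a = n+j \<and> b = k) \<or> (a = n+k \<and> b = j)"
  unfolding Yroot_def madd_def Emat_def by (auto split: if_splits)
lemma Mm_levi: "p < i \<Longrightarrow> q < i \<Longrightarrow> i < n \<Longrightarrow> Mm n p q \<in> levi n i"
  unfolding levi_def apply (rule gdeg_intro) apply simp apply (simp add: Mm_sp)
  apply (drule Mm_nz) apply (auto simp: gr_def) done
lemma Yroot_gdeg: "j < i \<Longrightarrow> k < i \<Longrightarrow> i < n \<Longrightarrow> Yroot n j k \<in> gdeg n i (-2)"
  apply (rule gdeg_intro) apply simp apply (simp add: Yroot_sp)
  apply (drule Yroot_nz) apply (auto simp: gr_def) done

lemma tspan_slices:
  assumes "S \<in> tspan U W"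
    and U0: "(\<lambda>a b. 0) \<in> U" and Ua: "\<And>X Y. X \<in> U \<Longrightarrow> Y \<in> U \<Longrightarrow> (\<lambda>a b. X a b + Y a b) \<in> U"
    and Us: "\<And>X s. X \<in> U \<Longrightarrow> (\<lambda>a b. s * X a b) \<in> U"
    and W0: "(\<lambda>a b. 0) \<in> W" and Wa: "\<And>X Y. X \<in> W \<Longrightarrow> Y \<in> W \<Longrightarrow> (\<lambda>a b. X a b + Y a b) \<in> W"
    and Ws: "\<And>X s. X \<in> W \<Longrightarrow> (\<lambda>a b. s * X a b) \<in> W"
  shows "(\<forall>c d. (\<lambda>a b. S a b c d) \<in> U) \<and> (\<forall>a b. (\<lambda>c d. S a b c d) \<in> W)"
  using assms(1)
proof induct
  case tspan_zero then show ?case using U0 W0 by (simp add: tzero_def)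
next
  case (tspan_tp A B)
  have "(\<lambda>a b. tp A B a b c d) = (\<lambda>a b. B c d * A a b)" for c d by (simp add: tp_def mult.commute)
  moreover have "(\<lambda>c d. tp A B a b c d) = (\<lambda>c d. A a b * B c d)" for a b by (simp add: tp_def)
  ultimately show ?case using tspan_tp Us Ws by simp
next
  case (tspan_add S T) then show ?case using Ua Wa by (simp add: tadd_def)
next
  case (tspan_smult S x) then show ?case using Us Ws by (simp add: tsmult_def)
qed

lemma levi_slices:
  assumes "S \<in> tspan (levi n i) (gdeg n i (-2))" "i \<le> n"
  shows "\<And>c d. (\<lambda>a b. S a b c d) \<in> levi n i" "\<And>a b. (\<lambda>c d. S a b c d) \<in> gdeg n i (-2)"
  using tspan_slices[OF assms(1)] assms(2) unfolding levi_def
  by (simp_all add: gdeg_zero gdeg_add gdeg_smult)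

lemma tadd_eq: "tadd S T = S + T" by (simp add: tadd_def fun_eq_iff)
lemma tzero_eq: "tzero = 0" by (simp add: tzero_def fun_eq_iff)

lemma tspan_diff: "S \<in> tspan U W \<Longrightarrow> T \<in> tspan U W \<Longrightarrow> S - T \<in> tspan U W"
proof -
  assume "S \<in> tspan U W" "T \<in> tspan U W"
  then have "tadd S (tsmult (-1) T) \<in> tspan U W" by (intro tspan_add tspan_smult)
  moreover have "tadd S (tsmult (-1) T) = S - T" by (simp add: tadd_def tsmult_def fun_eq_iff)
  ultimately show ?thesis by simp
qed

lemma tspan_sum: "finite A \<Longrightarrow> (\<And>m. m \<in> A \<Longrightarrow> f m \<in> tspan U W) \<Longrightarrow> sum f A \<in> tspan U W"
proof (induct A rule: finite_induct)
  case empty then show ?case using tspan_zero[of U W] by (simp only: tzero_eq sum.empty)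
next
  case (insert x F)
  then have "sum f (insert x F) = tadd (f x) (sum f F)" by (simp add: tadd_eq)
  then show ?case using insert tspan_add[of "f x" U W "sum f F"] by simp
qed

lemma tact_tp: "tact n Z (tp A B) = tp (brk n Z A) B + tp A (brk n Z B)"
  unfolding tact_def tp_def brk_def mmult_def
  by (simp add: fun_eq_iff sum_subtractf sum.distrib sum_distrib_left sum_distrib_right algebra_simps)

lemma tact_add: "tact n Z (S + T) = tact n Z S + tact n Z T"
  unfolding tact_def by (simp add: fun_eq_iff sum_subtractf sum.distrib algebra_simps)
lemma tact_diff: "tact n Z (S - T) = tact n Z S - tact n Z T"
  unfolding tact_def by (simp add: fun_eq_iff sum_subtractf sum.distrib algebra_simps)
lemma tact_zero: "tact n Z 0 = 0"
  unfolding tact_def by (simp add: fun_eq_iff)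
lemma tact_sum_fin: "finite A \<Longrightarrow> tact n Z (sum f A) = (\<Sum>m\<in>A. tact n Z (f m))"
proof (induct A rule: finite_induct)
  case empty
  show ?case by (metis sum.empty tact_zero)
next
  case (insert x F)
  have "tact n Z (sum f (insert x F)) = tact n Z (f x + sum f F)" using insert(1,2) by (metis sum.insert)
  also have "\<dots> = tact n Z (f x) + tact n Z (sum f F)" by (rule tact_add)
  also have "\<dots> = (\<Sum>m\<in>insert x F. tact n Z (f m))" using insert by (metis sum.insert)
  finally show ?case .
qed
lemma tact_sum: "tact n Z (sum f A) = (\<Sum>m\<in>A. tact n Z (f m))"
  by (metis sum.infinite tact_sum_fin tact_zero)


lemma tact_Zadd: "tact n (\<lambda>a b. Z1 a b + Z2 a b) T = tact n Z1 T + tact n Z2 T"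
  unfolding tact_def by (simp add: fun_eq_iff sum_subtractf sum.distrib algebra_simps)
lemma tact_Zsmult: "tact n (\<lambda>a b. s * Z a b) T = (\<lambda>a b c d. s * tact n Z T a b c d)"
  unfolding tact_def by (simp add: fun_eq_iff sum_subtractf sum.distrib sum_distrib_left algebra_simps)

lemma sum_delta_g1: "(\<Sum>e<(N::nat). if e = q then f e else 0) = (if q < N then f q else (0::'a::comm_monoid_add))"
  by (simp only: sum.delta[OF finite_lessThan] lessThan_iff)
lemma sum_delta_g2: "(\<Sum>e<(N::nat). if q = e then f e else 0) = (if q < N then f q else (0::'a::comm_monoid_add))"
  by (simp only: sum.delta'[OF finite_lessThan] lessThan_iff)

definition v0 :: "nat \<Rightarrow> nat \<Rightarrow> tens" where
  "v0 n i = (\<Sum>m<i. tp (Mm n m 1) (Yroot n 0 m) - tp (Mm n m 0) (Yroot n 1 m))"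

lemma v0_ent: "v0 n i a b c d = (\<Sum>m<i. Mm n m 1 a b * Yroot n 0 m c d - Mm n m 0 a b * Yroot n 1 m c d)"
  unfolding v0_def by (simp add: sum_fun_apply tp_def)

lemma v0_tspan: "2 \<le> i \<Longrightarrow> i < n \<Longrightarrow> v0 n i \<in> tspan (levi n i) (gdeg n i (-2))"
  unfolding v0_def
  by (intro tspan_sum tspan_diff tspan_tp Mm_levi Yroot_gdeg) auto

lemma v0_111: "2 \<le> i \<Longrightarrow> i < n \<Longrightarrow> v0 n i 1 1 n 1 = 1"
  unfolding v0_ent Mm_def Emat_def Yroot_ent by (simp add: sum_delta_g1 sum_delta_g2 if_distrib[of "\<lambda>x. x * _"] cong: if_cong)

lemma cartan_off: "H \<in> cartan n \<Longrightarrow> a \<noteq> e \<Longrightarrow> H a e = 0"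
  unfolding cartan_def by auto

lemma cartan_sum_left: "H \<in> cartan n \<Longrightarrow> (\<Sum>e<2*n. H a e * T e) = H a a * T a"
proof -
  assume h: "H \<in> cartan n"
  have "(\<Sum>e<2*n. H a e * T e) = (\<Sum>e<2*n. if e = a then H a a * T a else 0)"
  proof (rule sum.cong)
    fix e show "H a e * T e = (if e = a then H a a * T a else 0)"
      by (cases "e = a") (simp_all add: cartan_off[OF h])
  qed simp
  also have "\<dots> = H a a * T a"
    using h sp_out[of H n a a] by (simp add: sum_delta_g1 cartan_def)
  finally show ?thesis .
qed

lemma cartan_sum_right: "H \<in> cartan n \<Longrightarrow> (\<Sum>e<2*n. T e * H e b) = T b * H b b"
proof -
  assume h: "H \<in> cartan n"
  have "(\<Sum>e<2*n. T e * H e b) = (\<Sum>e<2*n. if e = b then T b * H b b else 0)"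
  proof (rule sum.cong)
    fix e show "T e * H e b = (if e = b then T b * H b b else 0)"
      by (cases "e = b") (simp_all add: cartan_off[OF h])
  qed simp
  also have "\<dots> = T b * H b b"
    using h sp_out[of H n b b] by (simp add: sum_delta_g1 cartan_def)
  finally show ?thesis .
qed

lemma tact_cartan: "H \<in> cartan n \<Longrightarrow> tact n H T a b c d = (H a a - H b b + H c c - H d d) * T a b c d"
proof -
  assume h: "H \<in> cartan n"
  have "tact n H T a b c d = (\<Sum>e<2*n. H a e * T e b c d) - (\<Sum>e<2*n. T a e c d * H e b)
     + (\<Sum>e<2*n. H c e * T a b e d) - (\<Sum>e<2*n. T a b c e * H e d)"
    unfolding tact_def by (simp only: sum_subtractf sum.distrib)
  also have "\<dots> = H a a * T a b c d - T a b c d * H b b + H c c * T a b c d - T a b c d * H d d"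
    by (simp only: cartan_sum_left[OF h] cartan_sum_right[OF h, where T="\<lambda>e. T a e c d"]
      cartan_sum_right[OF h, where T="\<lambda>e. T a b c e"]
      cartan_sum_left[OF h, where T="\<lambda>e. T a b e d"])
  finally show ?thesis by (simp add: algebra_simps)
qed


lemma weight_term:
  assumes H: "H \<in> cartan n" and "m < n" "r < n" "s < n" "j < n"
  shows "(H a a - H b b + H c c - H d d + H s s + H r r) * (Mm n m r a b * Yroot n s m c d) = 0"
proof (cases "Mm n m r a b = 0 \<or> Yroot n s m c d = 0")
  case True then show ?thesis by auto
next
  case False
  have Hn: "\<And>x. x < n \<Longrightarrow> H (n+x) (n+x) = - H x x" using H sp_nn unfolding cartan_def by blast
  from False have "(a = m \<and> b = r) \<or> (a = n+r \<and> b = n+m)" "(c = n+s \<and> d = m) \<or> (c = n+m \<and> d = s)"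
    using Mm_nz Yroot_nz by blast+
  then show ?thesis using Hn assms by (elim disjE conjE) simp_all
qed

lemma v0_weight: assumes "H \<in> cartan n" "2 \<le> i" "i < n"
  shows "tact n H (v0 n i) = tsmult (- (H 0 0 + H 1 1)) (v0 n i)"
proof -
  have "(H a a - H b b + H c c - H d d) * v0 n i a b c d = - (H 0 0 + H 1 1) * v0 n i a b c d" for a b c d
  proof -
    have "(H a a - H b b + H c c - H d d + (H 0 0 + H 1 1)) * v0 n i a b c d = 0"
      unfolding v0_ent sum_distrib_left
    proof (rule sum.neutral, rule ballI)
      fix m assume "m \<in> {..<i}"
      then have m: "m < n" using assms by simp
      have 1: "(H a a - H b b + H c c - H d d + H 0 0 + H 1 1) * (Mm n m 1 a b * Yroot n 0 m c d) = 0"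
        using weight_term[OF assms(1) m, of 1 0 0 a b c d] assms by simp
      have 2: "(H a a - H b b + H c c - H d d + H 1 1 + H 0 0) * (Mm n m 0 a b * Yroot n 1 m c d) = 0"
        using weight_term[OF assms(1) m, of 0 1 0 a b c d] assms by simp
      show "(H a a - H b b + H c c - H d d + (H 0 0 + H 1 1)) * (Mm n m 1 a b * Yroot n 0 m c d - Mm n m 0 a b * Yroot n 1 m c d) = 0"
        using 1 2 by (simp add: algebra_simps)
    qed
    then show ?thesis by (simp add: algebra_simps)
  qed
  then show ?thesis using tact_cartan[OF assms(1)] by (simp add: fun_eq_iff tsmult_def)
qed

lemma mmult_Mm_left: "p < n \<Longrightarrow> q < n \<Longrightarrow> mmult n (Mm n p q) X a b = (if a = p then X q b else 0) - (if a = n+q then X (n+p) b else 0)"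
  unfolding mmult_def Mm_def Emat_def
  by (cases "a = p"; cases "a = n+q"; simp add: left_diff_distrib sum_subtractf sum_negf if_distrib[of "\<lambda>x. x * _"] cong: if_cong)

lemma mmult_Mm_right: "p < n \<Longrightarrow> q < n \<Longrightarrow> mmult n X (Mm n p q) a b = (if b = q then X a p else 0) - (if b = n+p then X a (n+q) else 0)"
  unfolding mmult_def Mm_def Emat_def
  by (cases "b = q"; cases "b = n+p"; simp add: right_diff_distrib sum_subtractf sum_negf if_distrib[of "\<lambda>x. _ * x"] cong: if_cong)

lemma brk_Mm: "p < n \<Longrightarrow> q < n \<Longrightarrow> brk n (Mm n p q) X a b =
   (if a = p then X q b else 0) - (if a = n+q then X (n+p) b else 0) - (if b = q then X a p else 0) + (if b = n+p then X a (n+q) else 0)"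
  unfolding brk_def by (simp add: mmult_Mm_left mmult_Mm_right)

lemma brk_MM: assumes "p < n" "q < n" "r < n" "s < n"
  shows "brk n (Mm n p q) (Mm n r s) = (if q = r then Mm n p s else 0) - (if s = p then Mm n r q else 0)"
proof (rule ext)+
  fix a b show "brk n (Mm n p q) (Mm n r s) a b = ((if q = r then Mm n p s else 0) - (if s = p then Mm n r q else 0)) a b"
    unfolding brk_Mm[OF assms(1,2)] using assms
    by (cases "q = r"; cases "s = p"; simp add: Mm_def Emat_def)
qed

lemma brk_MY: assumes "p < n" "q < n" "j < n" "k < n"
  shows "brk n (Mm n p q) (Yroot n j k) = - (if p = j then Yroot n q k else 0) - (if p = k then Yroot n j q else 0)"
proof (rule ext)+
  fix a b show "brk n (Mm n p q) (Yroot n j k) a b = (- (if p = j then Yroot n q k else 0) - (if p = k then Yroot n j q else 0)) a b"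
    unfolding brk_Mm[OF assms(1,2)] using assms
    by (cases "p = j"; cases "p = k"; cases "a = n + q"; cases "b = q"; simp add: Yroot_ent)
qed

lemma tp_diff_l: "tp (A - B) C = tp A C - tp B C" by (simp add: tp_def fun_eq_iff algebra_simps)
lemma tp_diff_r: "tp A (B - C) = tp A B - tp A C" by (simp add: tp_def fun_eq_iff algebra_simps)
lemma tp_uminus_l: "tp (- A) C = - tp A C" by (simp add: tp_def fun_eq_iff)
lemma tp_uminus_r: "tp A (- C) = - tp A C" by (simp add: tp_def fun_eq_iff)
lemma tp_zero_l: "tp 0 C = 0" by (simp add: tp_def fun_eq_iff)
lemma tp_zero_r: "tp A 0 = 0" by (simp add: tp_def fun_eq_iff)
lemma tp_if_l: "tp (if P then A else 0) C = (if P then tp A C else 0)" by (simp add: tp_zero_l)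
lemma tp_if_r: "tp A (if P then C else 0) = (if P then tp A C else 0)" by (simp add: tp_zero_r)

lemma Yroot_sym: "Yroot n j k = Yroot n k j"
  unfolding Yroot_def madd_def by (simp add: fun_eq_iff add.commute)

lemma tact_Mm_v0: assumes "q < p" "p < i" "i < n"
  shows "tact n (Mm n p q) (v0 n i) = 0"
proof -
  let ?T = "Mm n p q"
  have "tact n ?T (v0 n i) = (\<Sum>m<i. tp (brk n ?T (Mm n m 1)) (Yroot n 0 m) + tp (Mm n m 1) (brk n ?T (Yroot n 0 m))
      - (tp (brk n ?T (Mm n m 0)) (Yroot n 1 m) + tp (Mm n m 0) (brk n ?T (Yroot n 1 m))))"
    unfolding v0_def tact_sum tact_diff tact_tp ..
  also have "\<dots> = (\<Sum>m<i. tp ((if q = m then Mm n p 1 else 0) - (if 1 = p then Mm n m q else 0)) (Yroot n 0 m)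
      + tp (Mm n m 1) (- (if p = 0 then Yroot n q m else 0) - (if p = m then Yroot n 0 q else 0))
      - (tp ((if q = m then Mm n p 0 else 0) - (if 0 = p then Mm n m q else 0)) (Yroot n 1 m)
      + tp (Mm n m 0) (- (if p = 1 then Yroot n q m else 0) - (if p = m then Yroot n 1 q else 0))))"
    using assms by (intro sum.cong refl) (simp add: brk_MM brk_MY)
  also have "\<dots> = 0"
  proof (cases "p = 1")
    case True
    then have q: "q = 0" using assms by simp
    show ?thesis using True q assms
      by (simp add: tp_diff_l tp_diff_r tp_uminus_r tp_if_l tp_if_r sum.distrib sum_subtractf sum_negf
          sum_delta_g1 sum_delta_g2 Yroot_sym[of n 1 0])
  next
    case False
    then show ?thesis using assms
      by (simp add: tp_diff_l tp_diff_r tp_uminus_r tp_if_l tp_if_r sum.distrib sum_subtractf sum_negf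
          sum_delta_g1 sum_delta_g2)
  qed
  finally show ?thesis .
qed

definition Fb :: "nat \<Rightarrow> nat \<Rightarrow> nat \<Rightarrow> bool" where
  "Fb n i x \<longleftrightarrow> x < i \<or> (n \<le> x \<and> x < n + i)"

lemma MY_supp: assumes "m < i" "r < i" "s < i" "Mm n m r a b * Yroot n s m c d \<noteq> 0"
  shows "Fb n i a \<and> Fb n i b \<and> Fb n i c \<and> Fb n i d"
proof -
  from assms(4) have "Mm n m r a b \<noteq> 0" "Yroot n s m c d \<noteq> 0" by auto
  then have "(a = m \<and> b = r) \<or> (a = n+r \<and> b = n+m)" "(c = n+s \<and> d = m) \<or> (c = n+m \<and> d = s)"
    using Mm_nz Yroot_nz by blast+
  then show ?thesis using assms(1-3) unfolding Fb_def by (elim disjE conjE) simp_all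
qed

lemma v0_supp: assumes "v0 n i a b c d \<noteq> 0" "2 \<le> i"
  shows "Fb n i a \<and> Fb n i b \<and> Fb n i c \<and> Fb n i d"
proof (rule ccontr)
  assume nf: "\<not> (Fb n i a \<and> Fb n i b \<and> Fb n i c \<and> Fb n i d)"
  have "v0 n i a b c d = 0" unfolding v0_ent
  proof (rule sum.neutral, rule ballI)
    fix m assume m: "m \<in> {..<i}"
    have "Mm n m 1 a b * Yroot n 0 m c d = 0" using MY_supp[of m i 1 0 n a b c d] nf m assms(2) by auto
    moreover have "Mm n m 0 a b * Yroot n 1 m c d = 0" using MY_supp[of m i 0 1 n a b c d] nf m assms(2) by auto
    ultimately show "Mm n m 1 a b * Yroot n 0 m c d - Mm n m 0 a b * Yroot n 1 m c d = 0" by (simp only: diff_self)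
  qed
  with assms(1) show False by simp
qed

lemma tact_Zplus: "tact n (Z1 + Z2) T = tact n Z1 T + tact n Z2 T"
  unfolding tact_def by (simp add: fun_eq_iff sum_subtractf sum.distrib algebra_simps)
lemma tact_Z0: "tact n 0 T = 0"
  unfolding tact_def by (simp add: fun_eq_iff)
lemma tact_Zdiff: "tact n (Z1 - Z2) T = tact n Z1 T - tact n Z2 T"
  unfolding tact_def by (simp add: fun_eq_iff sum_subtractf sum.distrib algebra_simps)

lemma tact_Zsum_fin: "finite A \<Longrightarrow> tact n (sum f A) T = (\<Sum>m\<in>A. tact n (f m) T)"
proof (induct A rule: finite_induct)
  case empty
  show ?case by (metis sum.empty tact_Z0)
next
  case (insert x F)
  have "tact n (sum f (insert x F)) T = tact n (f x + sum f F) T" using insert(1,2) by (metis sum.insert)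
  also have "\<dots> = tact n (f x) T + tact n (sum f F) T" by (rule tact_Zplus)
  also have "\<dots> = (\<Sum>m\<in>insert x F. tact n (f m) T)" using insert by (metis sum.insert)
  finally show ?case .
qed

definition Zl :: "nat \<Rightarrow> nat \<Rightarrow> cmat \<Rightarrow> cmat" where
  "Zl n i Z = (\<Sum>p<i. \<Sum>q<p. (\<lambda>a b. Z p q * Mm n p q a b))"

lemma tact_Zl_v0: assumes "i < n" shows "tact n (Zl n i Z) (v0 n i) = 0"
proof -
  have "tact n (Zl n i Z) (v0 n i) = (\<Sum>p<i. \<Sum>q<p. tact n (\<lambda>a b. Z p q * Mm n p q a b) (v0 n i))"
    unfolding Zl_def by (simp add: tact_Zsum_fin)
  also have "\<dots> = (\<Sum>p<i. \<Sum>q<p. (0::tens))"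
  proof (intro sum.cong refl)
    fix p q assume "p \<in> {..<i}" "q \<in> {..<p}"
    then have "tact n (Mm n p q) (v0 n i) = 0" using assms by (intro tact_Mm_v0) auto
    then show "tact n (\<lambda>a b. Z p q * Mm n p q a b) (v0 n i) = 0"
      unfolding tact_Zsmult by (simp add: fun_eq_iff)
  qed
  finally show ?thesis by simp
qed

lemma Zl_ent: "Zl n i Z a e = (\<Sum>p<i. \<Sum>q<p. Z p q * Mm n p q a e)"
  unfolding Zl_def by (simp add: sum_fun_apply)

lemma levi_sp: "Z \<in> levi n i \<Longrightarrow> Z \<in> sp n"
  unfolding levi_def gdeg_def by auto

lemma levi_gr: "i \<le> n \<Longrightarrow> Z \<in> levi n i \<Longrightarrow> Z a e \<noteq> 0 \<Longrightarrow> gr n i a = gr n i e"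
  unfolding levi_def using gdeg_elim[of i n Z 0 a e] by simp

lemma Zl_eq:
  assumes Z: "Z \<in> levi n i" "Z \<in> nbar_borel n" and i: "i < n" and F: "Fb n i a \<or> Fb n i e"
  shows "Zl n i Z a e = Z a e"
proof -
  have Zsp: "Z \<in> sp n" using levi_sp[OF Z(1)] .
  have nb1: "\<And>a b. a < n \<Longrightarrow> b < n \<Longrightarrow> a \<le> b \<Longrightarrow> Z a b = 0" using Z(2) unfolding nbar_borel_def by blast
  consider (A) "a < i" "e < i" | (B) x y where "a = n + x" "e = n + y" "x < i" "y < i" | (C) "\<not> (a < i \<and> e < i)" "\<not> (\<exists>x y. a = n + x \<and> e = n + y \<and> x < i \<and> y < i)"
    by (metis add_diff_inverse_nat)
  then show ?thesis
  proof cases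
    case A
    have "Zl n i Z a e = (\<Sum>p<i. \<Sum>q<p. if p = a then (if q = e then Z p q else 0) else 0)"
      unfolding Zl_ent using A i by (intro sum.cong refl) (auto simp: Mm_def Emat_def)
    also have "\<dots> = (\<Sum>p<i. if p = a then (\<Sum>q<p. if q = e then Z p q else 0) else 0)"
      by (intro sum.cong refl) auto
    also have "\<dots> = (if e < a then Z a e else 0)"
      using A by (simp only: sum_delta_g1) simp
    also have "\<dots> = Z a e" using nb1[of a e] A i by auto
    finally show ?thesis .
  next
    case B
    have "Zl n i Z a e = (\<Sum>p<i. \<Sum>q<p. - (if p = y then (if q = x then Z p q else 0) else 0))"
      unfolding Zl_ent using B i by (intro sum.cong refl) (auto simp: Mm_def Emat_def)
    also have "\<dots> = - (\<Sum>p<i. if p = y then (\<Sum>q<p. if q = x then Z p q else 0) else 0)"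
      by (simp only: sum_negf) (intro arg_cong[where f=uminus] sum.cong refl, auto)
    also have "\<dots> = - (if x < y then Z y x else 0)"
      using B by (simp only: sum_delta_g1) simp
    also have "\<dots> = Z a e" using nb1[of y x] B i sp_nn[OF Zsp, of x y] by auto
    finally show ?thesis .
  next
    case C
    have g: "gr n i a \<noteq> gr n i e" using C F i unfolding Fb_def gr_def by (auto, presburger+)
    have "Z a e = 0" using levi_gr[OF _ Z(1)] g i by fastforce
    moreover have "Zl n i Z a e = 0" unfolding Zl_ent
    proof (intro sum.neutral ballI)
      fix p q assume p: "p \<in> {..<i}" and q: "q \<in> {..<p}"
      show "Z p q * Mm n p q a e = 0"
      proof (rule ccontr)
        assume "Z p q * Mm n p q a e \<noteq> 0"
        then have "Mm n p q a e \<noteq> 0" by auto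
        then have "(a = p \<and> e = q) \<or> (a = n+q \<and> e = n+p)" by (rule Mm_nz)
        then show False
        proof
          assume "a = p \<and> e = q" then show False using C p q by auto
        next
          assume h: "a = n+q \<and> e = n+p"
          have "q < i" "p < i" using p q by auto
          then show False using C(2) h by blast
        qed
      qed
    qed
    ultimately show ?thesis by simp
  qed
qed

lemma v0_killed: assumes Z: "Z \<in> levi n i" "Z \<in> nbar_borel n" and i: "2 \<le> i" "i < n"
  shows "tact n Z (v0 n i) = tzero"
proof -
  let ?R = "Z - Zl n i Z"
  have R0: "\<And>x y. Fb n i x \<or> Fb n i y \<Longrightarrow> ?R x y = 0" using Zl_eq[OF Z i(2)] by simp
  have S: "\<And>a b c d. v0 n i a b c d \<noteq> 0 \<Longrightarrow> Fb n i a \<and> Fb n i b \<and> Fb n i c \<and> Fb n i d"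
    using v0_supp i(1) by blast
  have "tact n ?R (v0 n i) = 0"
  proof (rule ext)+
    fix a b c d
    have 1: "\<And>e. ?R a e * v0 n i e b c d = 0" using R0 S by (metis mult_eq_0_iff)
    have 2: "\<And>e. v0 n i a e c d * ?R e b = 0" using R0 S by (metis mult_eq_0_iff)
    have 3: "\<And>e. ?R c e * v0 n i a b e d = 0" using R0 S by (metis mult_eq_0_iff)
    have 4: "\<And>e. v0 n i a b c e * ?R e d = 0" using R0 S by (metis mult_eq_0_iff)
    show "tact n ?R (v0 n i) a b c d = 0 a b c d" unfolding tact_def zero_fun_apply
      by (rule sum.neutral) (simp only: 1 2 3 4 diff_self add_0 diff_0 minus_zero, simp)
  qed
  moreover have "Z = Zl n i Z + ?R" by simp
  ultimately have "tact n Z (v0 n i) = tact n (Zl n i Z) (v0 n i)"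
    by (metis add.right_neutral tact_Zplus)
  then show ?thesis using tact_Zl_v0[OF i(2)] by (simp add: tzero_eq)
qed

lemma v0_lw: assumes "2 \<le> i" "i < n" shows "lowest_wt_vec n i (v0 n i)"
  unfolding lowest_wt_vec_def
proof (intro conjI ballI)
  show "v0 n i \<in> tspan (levi n i) (gdeg n i (-2))" using v0_tspan assms .
  show "v0 n i \<noteq> tzero" using v0_111[OF assms] by (auto simp: tzero_def)
  show "tact n H (v0 n i) = tsmult (- (H 0 0 + H 1 1)) (v0 n i)" if "H \<in> cartan n" for H
    using v0_weight[OF that assms] .
  show "tact n Z (v0 n i) = tzero" if "Z \<in> levi n i \<inter> nbar_borel n" for Z
    using v0_killed[of Z n i] that assms by blast
qed

lemma tpair_tp: "tpair n (tp A B) (tp C D) = killing n A C * killing n B D"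
proof -
  let ?Y = "\<Sum>c<2*n. \<Sum>d<2*n. B c d * D d c"
  have 1: "(\<Sum>c<2*n. \<Sum>d<2*n. A a b * B c d * (C b a * D d c)) = (A a b * C b a) * ?Y" for a b
    by (simp add: sum_distrib_left mult_ac)
  have "tpair n (tp A B) (tp C D) = (of_nat (2*n+2))^2 * (\<Sum>a<2*n. \<Sum>b<2*n. (A a b * C b a) * ?Y)"
    unfolding tpair_def tp_def 1 ..
  also have "\<dots> = (of_nat (2*n+2))^2 * ((\<Sum>a<2*n. \<Sum>b<2*n. A a b * C b a) * ?Y)"
    by (simp add: sum_distrib_right)
  also have "\<dots> = killing n A C * killing n B D"
    unfolding killing_def mtrace_def mmult_def by (simp add: power2_eq_square mult_ac)
  finally show ?thesis .
qed

lemma tpair_add2: "tpair n S (T1 + T2) = tpair n S T1 + tpair n S T2"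
  unfolding tpair_def by (simp add: sum.distrib algebra_simps)
lemma tpair_zero2: "tpair n S 0 = 0"
  unfolding tpair_def by simp
lemma tpair_sum2_fin: "finite A \<Longrightarrow> tpair n S (sum f A) = (\<Sum>m\<in>A. tpair n S (f m))"
proof (induct A rule: finite_induct)
  case empty
  show ?case by (metis sum.empty tpair_zero2)
next
  case (insert x F)
  have "tpair n S (sum f (insert x F)) = tpair n S (f x + sum f F)" using insert(1,2) by (metis sum.insert)
  also have "\<dots> = tpair n S (f x) + tpair n S (sum f F)" by (rule tpair_add2)
  also have "\<dots> = (\<Sum>m\<in>insert x F. tpair n S (f m))" using insert by (metis sum.insert)
  finally show ?case .
qed
lemma tpair_smult2: "tpair n S (tsmult x T) = x * tpair n S T"
  unfolding tpair_def tsmult_def by (simp add: sum_distrib_left algebra_simps)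

lemma tpair_add1: "tpair n (S1 + S2) T = tpair n S1 T + tpair n S2 T"
  unfolding tpair_def by (simp add: sum.distrib algebra_simps)
lemma tpair_diff1: "tpair n (S1 - S2) T = tpair n S1 T - tpair n S2 T"
  unfolding tpair_def by (simp add: sum_subtractf algebra_simps)
lemma tpair_zero1: "tpair n 0 T = 0"
  unfolding tpair_def by simp
lemma tpair_sum1_fin: "finite A \<Longrightarrow> tpair n (sum f A) T = (\<Sum>m\<in>A. tpair n (f m) T)"
proof (induct A rule: finite_induct)
  case empty
  show ?case by (metis sum.empty tpair_zero1)
next
  case (insert x F)
  have "tpair n (sum f (insert x F)) T = tpair n (f x + sum f F) T" using insert(1,2) by (metis sum.insert)
  also have "\<dots> = tpair n (f x) T + tpair n (sum f F) T" by (rule tpair_add1)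
  also have "\<dots> = (\<Sum>m\<in>insert x F. tpair n (f m) T)" using insert by (metis sum.insert)
  finally show ?case .
qed
lemma tpair_scale1: "tpair n (\<lambda>a b c d. x * S a b c d) T = x * tpair n S T"
  unfolding tpair_def by (simp add: sum_distrib_left algebra_simps)

definition Sg :: "nat \<Rightarrow> (nat \<times> nat) set" where "Sg i = {(j,k). j \<le> k \<and> k < i}"
lemma Sg_fin: "finite (Sg i)"
  by (rule finite_subset[of _ "{..<i} \<times> {..<i}"]) (auto simp: Sg_def)

definition Wg :: "nat \<Rightarrow> cmat \<Rightarrow> nat \<Rightarrow> nat \<Rightarrow> cmat" where
  "Wg n X j k = brk n X (brk n X (Xstar n j k))"

lemma tau2_eq: "tau2 n i X = tsmult (1/2) (\<Sum>(j,k)\<in>Sg i. tp (Wg n X j k) (Xroot n j k))"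
  unfolding tau2_def tsmult_def Wg_def Sg_def
  by (simp add: fun_eq_iff sum_fun_apply case_prod_unfold)

lemma tr_Y: assumes "s < n" "m < n"
  shows "mtrace n (mmult n (Yroot n s m) B) = B m (n+s) + B s (n+m)"
proof -
  have "mmult n (Yroot n s m) B a a = (if a = n+s then B m a else 0) + (if a = n+m then B s a else 0)" for a
    unfolding mmult_def Yroot_ent using assms
    by (cases "a = n+s"; cases "a = n+m"; simp add: distrib_right sum.distrib if_distrib[of "\<lambda>x. x * _"] mult.assoc sum_distrib_left[symmetric] cong: if_cong)
  then show ?thesis unfolding mtrace_def using assms by (simp add: sum.distrib sum_delta_g1)
qed

lemma tr_M: assumes "p < n" "q < n"
  shows "mtrace n (mmult n (Mm n p q) B) = B q p - B (n+p) (n+q)"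
  unfolding mtrace_def mmult_Mm_left[OF assms] using assms by (simp add: sum_subtractf sum_delta_g1)

lemma Xroot_ent: "Xroot n j k a b = (if a = j \<and> b = n+k then 1 else 0) + (if a = k \<and> b = n+j then 1 else 0)"
  unfolding Xroot_def madd_def Emat_def by (rule refl)

lemma kill_YX: assumes "s < n" "m < n" "j < n" "k < n"
  shows "killing n (Yroot n s m) (Xroot n j k) = of_nat (2*n+2) * (2 * ((if s = j \<and> m = k then 1 else 0) + (if s = k \<and> m = j then 1 else 0)))"
  unfolding killing_def tr_Y[OF assms(1,2)] Xroot_ent
  by (cases "s = j"; cases "m = k"; cases "s = k"; cases "m = j"; simp)

lemma brk_msmult: "brk n X (msmult t A) = msmult t (brk n X A)"
  unfolding brk_def mmult_def msmult_def by (simp add: fun_eq_iff sum_distrib_left algebra_simps)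
lemma killing_msmult: "killing n M (msmult t A) = t * killing n M A"
  unfolding killing_def mtrace_def mmult_def msmult_def by (simp add: sum_distrib_left algebra_simps)

lemma Wg_eq: assumes "j < n" "k < n"
  shows "Wg n X j k = msmult (1 / (of_nat (2*n+2) * (2 * (1 + (if j = k then 1 else 0))))) (brk n X (brk n X (Yroot n j k)))"
proof -
  have "killing n (Yroot n j k) (Xroot n j k) = of_nat (2*n+2) * (2 * (1 + (if j = k then 1 else 0)))"
    using kill_YX[OF assms assms] by simp
  then show ?thesis unfolding Wg_def Xstar_def brk_msmult by simp
qed

lemma SUMG: assumes "s < i" "m < i" "i < n"
  shows "(\<Sum>(j,k)\<in>Sg i. killing n M (Wg n X j k) * killing n (Yroot n s m) (Xroot n j k))
       = killing n M (brk n X (brk n X (Yroot n s m)))"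
proof -
  define K where "K j k = killing n M (brk n X (brk n X (Yroot n j k)))" for j k
  define T where "T j k = K j k / (1 + (if j = k then 1 else 0))" for j k :: nat
  have c: "of_nat (2*n+2) \<noteq> (0::complex)" by (simp only: of_nat_eq_0_iff)
  have "of_nat (4 + n*4) \<noteq> (0::complex)" by (simp only: of_nat_eq_0_iff)
  then have c4: "(4::complex) + of_nat n * 4 \<noteq> 0" by simp
  have "of_nat (8 + n*8) \<noteq> (0::complex)" by (simp only: of_nat_eq_0_iff)
  then have c8: "(8::complex) + of_nat n * 8 \<noteq> 0" by simp
  have "(\<Sum>(j,k)\<in>Sg i. killing n M (Wg n X j k) * killing n (Yroot n s m) (Xroot n j k))
      = (\<Sum>x\<in>Sg i. (if x = (s,m) then T (fst x) (snd x) else 0) + (if x = (m,s) then T (fst x) (snd x) else 0))"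
  proof (rule sum.cong[OF refl], clarify)
    fix j k assume "(j,k) \<in> Sg i"
    then have jk: "j < n" "k < n" using assms unfolding Sg_def by auto
    have smn: "s < n" "m < n" using assms by auto
    show "killing n M (Wg n X j k) * killing n (Yroot n s m) (Xroot n j k)
        = (if (j,k) = (s,m) then T (fst (j,k)) (snd (j,k)) else 0) + (if (j,k) = (m,s) then T (fst (j,k)) (snd (j,k)) else 0)"
      unfolding Wg_eq[OF jk] killing_msmult kill_YX[OF smn jk] using assms jk c c4 c8
      by (cases "s = j"; cases "m = k"; cases "s = k"; cases "m = j"; simp add: T_def K_def field_simps)
  qed
  also have "\<dots> = (if (s,m) \<in> Sg i then T s m else 0) + (if (m,s) \<in> Sg i then T m s else 0)"
    by (simp add: sum.distrib Sg_fin)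
  also have "\<dots> = K s m"
    using assms unfolding Sg_def T_def K_def by (auto simp: Yroot_sym[of n m s])
  finally show ?thesis unfolding K_def .
qed

lemma sumE_left: "q < N \<Longrightarrow> (\<Sum>e<N. Emat p q a e * B e) = (if a = p then B q else 0)"
  unfolding Emat_def by (cases "a = p") (simp_all add: if_distrib[of "\<lambda>x. x * _"] cong: if_cong)
lemma sumE_right: "p < N \<Longrightarrow> (\<Sum>e<N. B e * Emat p q e b) = (if b = q then B p else 0)"
  unfolding Emat_def by (cases "b = q") (simp_all add: if_distrib[of "\<lambda>x. _ * x"] cong: if_cong)

definition Xg :: "nat \<Rightarrow> nat \<Rightarrow> cmat" where
  "Xg n i = (\<lambda>a b. Emat 0 (n+i) a b + Emat i n a b + Emat 1 i a b - Emat (n+i) (n+1) a b)"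

lemma brk_X: assumes "i < n" "2 \<le> i"
  shows "brk n (Xg n i) B a b = (if a = 0 then B (n+i) b else 0) + (if a = i then B n b else 0)
    + (if a = 1 then B i b else 0) - (if a = n+i then B (n+1) b else 0)
    - ((if b = n+i then B a 0 else 0) + (if b = n then B a i else 0) + (if b = i then B a 1 else 0)
       - (if b = n+1 then B a (n+i) else 0))"
proof -
  have "mmult n (Xg n i) B a b = (if a = 0 then B (n+i) b else 0) + (if a = i then B n b else 0)
    + (if a = 1 then B i b else 0) - (if a = n+i then B (n+1) b else 0)"
    unfolding mmult_def Xg_def using assms
    by (simp add: distrib_right left_diff_distrib sum.distrib sum_subtractf sumE_left[where B="\<lambda>e. B e b"])
  moreover have "mmult n B (Xg n i) a b = (if b = n+i then B a 0 else 0) + (if b = n then B a i else 0)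
    + (if b = i then B a 1 else 0) - (if b = n+1 then B a (n+i) else 0)"
    unfolding mmult_def Xg_def using assms
    by (simp add: distrib_left right_diff_distrib sum.distrib sum_subtractf sumE_right[where B="\<lambda>e. B a e"])
  ultimately show ?thesis unfolding brk_def by simp
qed

lemma G1: assumes "m < i" "2 \<le> i" "i < n"
  shows "killing n (Mm n m 1) (brk n (Xg n i) (brk n (Xg n i) (Yroot n 0 m))) = of_nat (2*n+2) * (2 + 2 * (if m = 0 then 1 else 0))"
  unfolding killing_def using assms
  by (simp add: tr_M brk_X Yroot_ent)

lemma G2: assumes "m < i" "2 \<le> i" "i < n"
  shows "killing n (Mm n m 0) (brk n (Xg n i) (brk n (Xg n i) (Yroot n 1 m))) = - of_nat (2*n+2) * (2 + 2 * (if m = 1 then 1 else 0))"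
  unfolding killing_def using assms
  by (simp add: tr_M brk_X Yroot_ent)

lemma P_v0: assumes "2 \<le> i" "i < n"
  shows "tpair n (v0 n i) (tau2 n i (Xg n i)) = of_nat (2*n+2) * of_nat (2*i+2)"
proof -
  let ?X = "Xg n i"
  let ?c = "of_nat (2*n+2) :: complex"
  have "tpair n (v0 n i) (tau2 n i ?X) = 1/2 * (\<Sum>(j,k)\<in>Sg i. tpair n (v0 n i) (tp (Wg n ?X j k) (Xroot n j k)))"
    unfolding tau2_eq tpair_smult2 by (simp add: tpair_sum2_fin[OF Sg_fin] case_prod_unfold)
  also have "\<dots> = 1/2 * (\<Sum>(j,k)\<in>Sg i. \<Sum>m<i. killing n (Mm n m 1) (Wg n ?X j k) * killing n (Yroot n 0 m) (Xroot n j k)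
        - killing n (Mm n m 0) (Wg n ?X j k) * killing n (Yroot n 1 m) (Xroot n j k))"
    unfolding v0_def by (simp add: tpair_sum1_fin tpair_diff1 tpair_tp)
  also have "\<dots> = 1/2 * (\<Sum>m<i. (\<Sum>(j,k)\<in>Sg i. killing n (Mm n m 1) (Wg n ?X j k) * killing n (Yroot n 0 m) (Xroot n j k))
        - (\<Sum>(j,k)\<in>Sg i. killing n (Mm n m 0) (Wg n ?X j k) * killing n (Yroot n 1 m) (Xroot n j k)))"
    unfolding case_prod_unfold by (subst sum.swap) (simp add: sum_subtractf)
  also have "\<dots> = 1/2 * (\<Sum>m<i. ?c * (2 + 2 * (if m = 0 then 1 else 0)) + ?c * (2 + 2 * (if m = 1 then 1 else 0)))"
  proof -
    have "\<And>m. m < i \<Longrightarrow> (\<Sum>(j,k)\<in>Sg i. killing n (Mm n m 1) (Wg n ?X j k) * killing n (Yroot n 0 m) (Xroot n j k))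
        - (\<Sum>(j,k)\<in>Sg i. killing n (Mm n m 0) (Wg n ?X j k) * killing n (Yroot n 1 m) (Xroot n j k))
        = ?c * (2 + 2 * (if m = 0 then 1 else 0)) + ?c * (2 + 2 * (if m = 1 then 1 else 0))"
      using assms by (simp only: SUMG G1 G2) simp
    then show ?thesis by (intro arg_cong[where f="\<lambda>x. 1/2 * x"] sum.cong) auto
  qed
  also have "\<dots> = ?c * of_nat (2*i+2)"
    using assms by (simp add: sum.distrib sum_distrib_left[symmetric] distrib_left sum_delta_g1 sum_delta_g2
      if_distrib[of "\<lambda>x. 2 * x"] cong: if_cong) (simp add: algebra_simps)
  finally show ?thesis .
qed

definition dl :: "nat \<Rightarrow> nat \<Rightarrow> int" where "dl u v = (if u = v then 1 else 0)"
definition IW :: "nat \<Rightarrow> nat \<Rightarrow> nat \<Rightarrow> nat \<Rightarrow> nat \<Rightarrow> nat \<Rightarrow> int" where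
  "IW n a b c d p = dl a p - dl a (n+p) - dl b p + dl b (n+p) + dl c p - dl c (n+p) - dl d p + dl d (n+p) + dl 0 p + dl 1 p"

lemma CL1: assumes "x < n" "y < n" "j < i" "k < i" "i < n" "2 \<le> i" and W: "\<forall>p<n. IW n x y (n+j) k p = 0"
  shows "(x = y \<and> (j=0\<and>k=1 \<or> j=1\<and>k=0)) \<or> (x=1 \<and> y=0 \<and> j=1 \<and> k=1) \<or> (x=0 \<and> y=1 \<and> j=0 \<and> k=0)
     \<or> (2 \<le> x \<and> y = 0 \<and> (j=1\<and>k=x \<or> j=x\<and>k=1)) \<or> (2 \<le> x \<and> y = 1 \<and> (j=0\<and>k=x \<or> j=x\<and>k=0))"
proof -
  have "IW n x y (n+j) k 0 = 0" "IW n x y (n+j) k 1 = 0" "IW n x y (n+j) k x = 0" "IW n x y (n+j) k y = 0"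
     "IW n x y (n+j) k j = 0" "IW n x y (n+j) k k = 0" using W assms by auto
  then show ?thesis using assms(1-6) unfolding IW_def dl_def by (simp, auto split: if_splits)
qed

lemma CL2: assumes "x < n" "y < n" "j < i" "k < i" "i < n" "2 \<le> i" and W: "\<forall>p<n. IW n x (n+y) (n+j) k p = 0"
  shows False
proof -
  have "IW n x (n+y) (n+j) k 0 = 0" "IW n x (n+y) (n+j) k 1 = 0" "IW n x (n+y) (n+j) k x = 0"
     using W assms by auto
  then show ?thesis using assms(1-6) unfolding IW_def dl_def by (simp, auto split: if_splits)
qed

lemma CL3: assumes "x < n" "y < n" "j < i" "k < i" "i < n" "2 \<le> i" and W: "\<forall>p<n. IW n (n+x) y (n+j) k p = 0"
  shows False
proof -
  have "IW n (n+x) y (n+j) k 0 = 0" "IW n (n+x) y (n+j) k 1 = 0" "IW n (n+x) y (n+j) k x = 0"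
     "IW n (n+x) y (n+j) k j = 0" "IW n (n+x) y (n+j) k k = 0"
     using W assms by auto
  then show ?thesis using assms(1-6) unfolding IW_def dl_def by (simp, auto split: if_splits)
qed

lemma gr_m2: "gr n i c - gr n i d = -2 \<Longrightarrow> n \<le> c \<and> c < n + i \<and> d < i"
  unfolding gr_def by (auto split: if_splits)

lemma Hd_cartan: "p < n \<Longrightarrow> Mm n p p \<in> cartan n"
  unfolding cartan_def using Mm_sp[of p n p] Mm_nz[of n p p] by blast

lemma Mm_diag: "Mm n p p x x = complex_of_int (dl x p - dl x (n+p))"
  unfolding Mm_def Emat_def dl_def by simp

lemma Mm_nbar: "q < p \<Longrightarrow> p < n \<Longrightarrow> Mm n p q \<in> nbar_borel n"
  unfolding nbar_borel_def using Mm_sp[of p n q] Mm_nz[of n p q] by fastforce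

lemma sumMm_left: "p < n \<Longrightarrow> q < n \<Longrightarrow> (\<Sum>e<2*n. Mm n p q a e * F e) = (if a = p then F q else 0) - (if a = n+q then F (n+p) else 0)"
  unfolding Mm_def Emat_def
  by (cases "a = p"; cases "a = n+q"; simp add: left_diff_distrib sum_subtractf sum_negf if_distrib[of "\<lambda>x. x * _"] cong: if_cong)

lemma sumMm_right: "p < n \<Longrightarrow> q < n \<Longrightarrow> (\<Sum>e<2*n. F e * Mm n p q e b) = (if b = q then F p else 0) - (if b = n+p then F (n+q) else 0)"
  unfolding Mm_def Emat_def
  by (cases "b = q"; cases "b = n+p"; simp add: right_diff_distrib sum_subtractf sum_negf if_distrib[of "\<lambda>x. _ * x"] cong: if_cong)

lemma tact_Mm_ent: assumes "p < n" "q < n"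
  shows "tact n (Mm n p q) T a b c d =
    (if a = p then T q b c d else 0) - (if a = n+q then T (n+p) b c d else 0)
  - ((if b = q then T a p c d else 0) - (if b = n+p then T a (n+q) c d else 0))
  + ((if c = p then T a b q d else 0) - (if c = n+q then T a b (n+p) d else 0))
  - ((if d = q then T a b c p else 0) - (if d = n+p then T a b c (n+q) else 0))"
proof -
  have "tact n (Mm n p q) T a b c d = (\<Sum>e<2*n. Mm n p q a e * T e b c d) - (\<Sum>e<2*n. T a e c d * Mm n p q e b)
     + (\<Sum>e<2*n. Mm n p q c e * T a b e d) - (\<Sum>e<2*n. T a b c e * Mm n p q e d)"
    unfolding tact_def by (simp only: sum_subtractf sum.distrib)
  then show ?thesis
    by (simp only: sumMm_left[OF assms] sumMm_right[OF assms, where F="\<lambda>e. T a e c d"]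
        sumMm_right[OF assms, where F="\<lambda>e. T a b c e"] sumMm_left[OF assms, where F="\<lambda>e. T a b e d"])
qed

lemma gdeg_sp: "X \<in> gdeg n i k \<Longrightarrow> X \<in> sp n" unfolding gdeg_def by simp

locale lwv =
  fixes n i :: nat and w :: tens
  assumes lw: "lowest_wt_vec n i w" and i2: "2 \<le> i" and "i < n"
begin

lemma iN: "i < n" using lwv_axioms lwv_def by blast
lemma n3: "3 \<le> n" using i2 iN by simp

lemma SL1: "(\<lambda>a b. w a b c d) \<in> levi n i"
  using levi_slices(1)[of w n i c d] lw iN unfolding lowest_wt_vec_def by simp
lemma SL2: "(\<lambda>c d. w a b c d) \<in> gdeg n i (-2)"
  using levi_slices(2)[of w n i a b] lw iN unfolding lowest_wt_vec_def by simp

lemma supCD: "w a b c d \<noteq> 0 \<Longrightarrow> n \<le> c \<and> c < n + i \<and> d < i"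
  using gdeg_elim[of i n "\<lambda>c d. w a b c d" "-2" c d] SL2 iN gr_m2 by simp

lemma supAB: "w a b c d \<noteq> 0 \<Longrightarrow> a < 2*n \<and> b < 2*n"
proof (rule ccontr)
  assume "w a b c d \<noteq> 0" "\<not> (a < 2*n \<and> b < 2*n)"
  then show False using sp_out[OF levi_sp[OF SL1], of a b c d] by (simp add: not_less)
qed

lemma Sym1: "j < n \<Longrightarrow> k < n \<Longrightarrow> w a b (n+j) k = w a b (n+k) j"
  using sp_low[OF gdeg_sp[OF SL2[of a b]], of j k] by simp

lemma Sym2: "x < n \<Longrightarrow> y < n \<Longrightarrow> w (n+x) (n+y) c d = - w y x c d"
  using sp_nn[OF levi_sp[OF SL1[of c d]], of x y] by simp

lemma WTi: assumes "p < n" "w a b c d \<noteq> 0" shows "IW n a b c d p = 0"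
proof -
  let ?H = "Mm n p p"
  have H: "?H \<in> cartan n" using Hd_cartan[OF assms(1)] .
  have "tact n ?H w a b c d = tsmult (- (?H 0 0 + ?H 1 1)) w a b c d"
    using lw H unfolding lowest_wt_vec_def by simp
  then have "(?H a a - ?H b b + ?H c c - ?H d d + (?H 0 0 + ?H 1 1)) * w a b c d = 0"
    unfolding tact_cartan[OF H] tsmult_def by (simp add: algebra_simps)
  then have "?H a a - ?H b b + ?H c c - ?H d d + (?H 0 0 + ?H 1 1) = 0" using assms(2) by simp
  moreover have "dl 0 (n+p) = 0" "dl 1 (n+p) = 0" using n3 by (simp_all add: dl_def)
  ultimately have "complex_of_int (IW n a b c d p) = 0" unfolding Mm_diag IW_def by (simp add: algebra_simps)
  then show ?thesis by simp
qed

lemma LOW: "q < p \<Longrightarrow> p < i \<Longrightarrow> tact n (Mm n p q) w a b c d = 0"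
  using lw Mm_levi[of p i q n] Mm_nbar[of q p n] iN unfolding lowest_wt_vec_def by (simp add: tzero_def)

end

context lwv begin

lemma R1: assumes "2 \<le> x" "x < n" shows "w x x n 1 = 0"
proof -
  have "tact n (Mm n 1 0) w x x n 0 = 0" using LOW[of 0 1] i2 by simp
  moreover have "w x x (n+1) 0 = w x x n 1" using Sym1[of 1 0 x x] n3 by simp
  ultimately show ?thesis using n3 assms by (simp add: tact_Mm_ent)
qed

lemma V0: "w 0 1 n 0 = 2 * w 1 1 n 1"
proof -
  have "tact n (Mm n 1 0) w 1 1 n 0 = 0" using LOW[of 0 1] i2 by simp
  moreover have "w 1 1 (n+1) 0 = w 1 1 n 1" using Sym1[of 1 0 1 1] n3 by simp
  ultimately show ?thesis using n3 by (simp add: tact_Mm_ent)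
qed

lemma Vd0: "w 0 0 n 1 = - w 1 1 n 1"
proof -
  have "tact n (Mm n 1 0) w 0 0 n 0 = 0" using LOW[of 0 1] i2 by simp
  moreover have "w 0 0 (n+1) 0 = w 0 0 n 1" using Sym1[of 1 0 0 0] n3 by simp
  ultimately show ?thesis using n3 V0 by (simp add: tact_Mm_ent)
qed

lemma V10: "w 1 0 (n+1) 1 = - 2 * w 1 1 n 1"
proof -
  have "tact n (Mm n 1 0) w 1 0 n 1 = 0" using LOW[of 0 1] i2 by simp
  then show ?thesis using n3 Vd0 by (simp add: tact_Mm_ent)
qed

lemma Vm1: assumes "2 \<le> m" "m < i" shows "w m 1 n m = w 1 1 n 1"
proof -
  have "tact n (Mm n m 0) w m 1 n 0 = 0" using LOW[of 0 m] assms by simp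
  moreover have "w m 1 (n+m) 0 = w m 1 n m" using Sym1[of m 0 m 1] assms iN by simp
  ultimately show ?thesis using n3 V0 assms iN by (simp add: tact_Mm_ent)
qed

lemma Vm0: assumes "2 \<le> m" "m < i" shows "w m 0 (n+1) m = - w 1 1 n 1"
proof -
  have "tact n (Mm n 1 0) w m 0 n m = 0" using LOW[of 0 1] i2 by simp
  then show ?thesis using n3 Vm1[OF assms] assms iN by (simp add: tact_Mm_ent)
qed

end

definition K1 :: "nat \<Rightarrow> nat \<Rightarrow> nat \<Rightarrow> nat \<Rightarrow> complex" where
  "K1 x y j k = (if x = y \<and> (j=0\<and>k=1 \<or> j=1\<and>k=0) then (if x = 0 then -1 else if x = 1 then 1 else 0)
     else if x=1 \<and> y=0 \<and> j=1 \<and> k=1 then -2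
     else if x=0 \<and> y=1 \<and> j=0 \<and> k=0 then 2
     else if 2 \<le> x \<and> y = 0 \<and> (j=1\<and>k=x \<or> j=x\<and>k=1) then -1
     else if 2 \<le> x \<and> y = 1 \<and> (j=0\<and>k=x \<or> j=x\<and>k=0) then 1 else 0)"

definition Kval :: "nat \<Rightarrow> nat \<Rightarrow> nat \<Rightarrow> nat \<Rightarrow> nat \<Rightarrow> nat \<Rightarrow> complex" where
  "Kval n i a b c d = (if n \<le> c \<and> c < n + i \<and> d < i then
     (if a < n \<and> b < n then K1 a b (c - n) d
      else if n \<le> a \<and> a < 2*n \<and> n \<le> b \<and> b < 2*n then - K1 (b - n) (a - n) (c - n) d else 0) else 0)"

context lwv begin

lemma VAL1: assumes "x < n" "y < n" "j < i" "k < i"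
  shows "w x y (n+j) k = K1 x y j k * w 1 1 n 1"
proof (cases "(x = y \<and> (j=0\<and>k=1 \<or> j=1\<and>k=0)) \<or> (x=1 \<and> y=0 \<and> j=1 \<and> k=1) \<or> (x=0 \<and> y=1 \<and> j=0 \<and> k=0)
     \<or> (2 \<le> x \<and> y = 0 \<and> (j=1\<and>k=x \<or> j=x\<and>k=1)) \<or> (2 \<le> x \<and> y = 1 \<and> (j=0\<and>k=x \<or> j=x\<and>k=0))")
  case True
  then show ?thesis
  proof (elim disjE conjE)
    assume h: "x = y" "j = 0" "k = 1"
    show ?thesis
    proof -
      consider "x = 0" | "x = 1" | "2 \<le> x" by linarith
      then show ?thesis using h Vd0 R1[of x] assms by cases (simp_all add: K1_def)
    qed
  next
    assume h: "x = y" "j = 1" "k = 0"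
    have s: "w x x (n+1) 0 = w x x n 1" using Sym1[of 1 0 x x] n3 by simp
    consider "x = 0" | "x = 1" | "2 \<le> x" by linarith
    then show ?thesis using h s Vd0 R1[of x] assms by cases (simp_all add: K1_def)
  next
    assume h: "x = 1" "y = 0" "j = 1" "k = 1"
    then show ?thesis using V10 by (simp add: K1_def)
  next
    assume h: "x = 0" "y = 1" "j = 0" "k = 0"
    then show ?thesis using V0 by (simp add: K1_def)
  next
    assume h: "2 \<le> x" "y = 0" "j = 1" "k = x"
    then show ?thesis using Vm0[of x] assms by (simp add: K1_def)
  next
    assume h: "2 \<le> x" "y = 0" "j = x" "k = 1"
    have s: "w x 0 (n+x) 1 = w x 0 (n+1) x" using Sym1[of x 1 x 0] n3 assms h by simp
    then show ?thesis using h Vm0[of x] assms by (simp add: K1_def)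
  next
    assume h: "2 \<le> x" "y = 1" "j = 0" "k = x"
    then show ?thesis using Vm1[of x] assms by (simp add: K1_def)
  next
    assume h: "2 \<le> x" "y = 1" "j = x" "k = 0"
    have s: "w x 1 (n+x) 0 = w x 1 (n+0) x" using Sym1[of x 0 x 1] n3 assms h by simp
    then show ?thesis using h Vm1[of x] assms by (simp add: K1_def)
  qed
next
  case False
  have "w x y (n+j) k = 0"
  proof (rule ccontr)
    assume "w x y (n+j) k \<noteq> 0"
    then have "\<forall>p<n. IW n x y (n+j) k p = 0" using WTi by blast
    then show False using CL1[OF assms iN i2] False by blast
  qed
  moreover have "K1 x y j k = 0" using False unfolding K1_def by auto
  ultimately show ?thesis by simp
qed

lemma VALUE: "w a b c d = Kval n i a b c d * w 1 1 n 1"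
proof (cases "n \<le> c \<and> c < n + i \<and> d < i")
  case False
  then have "w a b c d = 0" using supCD by blast
  moreover have "Kval n i a b c d = 0" unfolding Kval_def using False by (rule if_not_P)
  ultimately show ?thesis by simp
next
  case True
  then obtain j where j: "c = n + j" "j < i" by (metis add_less_cancel_left le_Suc_ex)
  have d: "d < i" using True by simp
  consider (A) "a < n" "b < n" | (B) "n \<le> a" "a < 2*n" "n \<le> b" "b < 2*n" | (C) "\<not> (a < n \<and> b < n)" "\<not> (n \<le> a \<and> a < 2*n \<and> n \<le> b \<and> b < 2*n)"
    by blast
  then show ?thesis
  proof cases
    case A then show ?thesis using VAL1[of a b j d] j d by (simp add: Kval_def)
  next
    case B
    obtain x y where xy: "a = n + x" "b = n + y" "x < n" "y < n" using B
      by (metis add_less_cancel_left le_Suc_ex mult_2)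
    have "w a b c d = - w y x c d" using Sym2[of x y c d] xy by simp
    also have "\<dots> = - (K1 y x j d * w 1 1 n 1)" using VAL1[of y x j d] xy j d by simp
    finally show ?thesis using xy j True by (simp add: Kval_def)
  next
    case C
    have "w a b c d = 0"
    proof (rule ccontr)
      assume nz: "w a b c d \<noteq> 0"
      then have ab: "a < 2*n" "b < 2*n" using supAB by auto
      have W: "\<forall>p<n. IW n a b c d p = 0" using WTi nz by blast
      have dn: "d < n" using d iN by simp
      have jn: "j < n" using j iN by simp
      show False
      proof (cases "a < n")
        case True
        then have "n \<le> b" using C by auto
        then obtain y where "b = n + y" "y < n" using ab by (metis add_less_cancel_left le_Suc_ex mult_2)
        then show False using CL2[of a n y j i d] W True j d iN i2 by simp
      next
        case False
        then have "b < n" using C ab by auto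
        obtain x where "a = n + x" "x < n" using False ab by (metis add_less_cancel_left le_Suc_ex mult_2 not_less)
        then show False using CL3[of x n b j i d] W \<open>b < n\<close> j d iN i2 by simp
      qed
    qed
    moreover have "Kval n i a b c d = 0" unfolding Kval_def using C by auto
    ultimately show ?thesis by simp
  qed
qed

end

lemma Xg_ent: "Xg n i a b = (if a = 0 \<and> b = n+i then 1 else 0) + (if a = i \<and> b = n then 1 else 0)
   + (if a = 1 \<and> b = i then 1 else 0) - (if a = n+i \<and> b = n+1 then 1 else 0)"
  unfolding Xg_def Emat_def by (rule refl)

lemma Xg_sp: assumes "i < n" "2 \<le> i" shows "Xg n i \<in> sp n"
  unfolding sp_char2
  apply (intro conjI allI impI)
  subgoal for a b unfolding Xg_ent using assms by (elim disjE; simp)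
  subgoal for x y unfolding Xg_ent using assms by simp
  subgoal for x y unfolding Xg_ent using assms by (cases "x=0"; cases "y=i"; cases "x=i"; cases "y=0"; simp)
  subgoal for x y unfolding Xg_ent using assms by (cases "x=i"; cases "y=1"; simp)
  done

lemma Xg_nz: "Xg n i a b \<noteq> 0 \<Longrightarrow> (a = 0 \<and> b = n+i) \<or> (a = i \<and> b = n) \<or> (a = 1 \<and> b = i) \<or> (a = n+i \<and> b = n+1)"
  unfolding Xg_ent by (auto split: if_splits)

lemma Xg_gdeg: assumes "i < n" "2 \<le> i" shows "Xg n i \<in> gdeg n i 1"
  apply (rule gdeg_intro)
  using assms apply simp
  using Xg_sp[OF assms] apply simp
  subgoal for a b apply (drule Xg_nz) using assms by (elim disjE conjE) (simp_all add: gr_def)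
  done

theorem proposition5p6:
  fixes n i :: nat
  assumes "3 \<le> n" and "2 \<le> i" and "i \<le> n - 1"
  shows "(\<exists>v. lowest_wt_vec n i v) \<and>
         (\<forall>v. lowest_wt_vec n i v \<longrightarrow>
            (\<exists>Y \<in> gen_submod n (levi n i) v. \<exists>X \<in> gdeg n i 1.
               tpair n Y (tau2 n i X) \<noteq> 0))"
proof -
  have iN: "i < n" using assms by simp
  have lw0: "lowest_wt_vec n i (v0 n i)" using v0_lw[OF assms(2) iN] .
  have part2: "\<forall>v. lowest_wt_vec n i v \<longrightarrow>
            (\<exists>Y \<in> gen_submod n (levi n i) v. \<exists>X \<in> gdeg n i 1. tpair n Y (tau2 n i X) \<noteq> 0)"
  proof (intro allI impI)
    fix v assume lv: "lowest_wt_vec n i v"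
    interpret L: lwv n i v using lv assms iN by unfold_locales auto
    interpret L0: lwv n i "v0 n i" using lw0 assms iN by unfold_locales auto
    define t where "t = v 1 1 n 1"
    have vt: "v = (\<lambda>a b c d. t * v0 n i a b c d)"
    proof (rule ext)+
      fix a b c d
      show "v a b c d = t * v0 n i a b c d"
        using L.VALUE[of a b c d] L0.VALUE[of a b c d] v0_111[OF assms(2) iN] unfolding t_def by simp
    qed
    have t0: "t \<noteq> 0"
    proof
      assume "t = 0"
      then have "v = tzero" using vt by (simp add: tzero_def)
      then show False using lv unfolding lowest_wt_vec_def by simp
    qed
    have "tpair n v (tau2 n i (Xg n i)) = t * (of_nat (2*n+2) * of_nat (2*i+2))"
      using vt tpair_scale1 P_v0[OF assms(2) iN] by metis
    also have "\<dots> \<noteq> 0"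
    proof -
      have c1: "of_nat (2*n+2) \<noteq> (0::complex)" unfolding of_nat_eq_0_iff by simp
      have c2: "of_nat (2*i+2) \<noteq> (0::complex)" unfolding of_nat_eq_0_iff by simp
      show ?thesis using t0 c1 c2 by (simp only: mult_eq_0_iff) simp
    qed
    finally have "tpair n v (tau2 n i (Xg n i)) \<noteq> 0" .
    moreover have "v \<in> gen_submod n (levi n i) v" by (rule gen_base)
    moreover have "Xg n i \<in> gdeg n i 1" using Xg_gdeg[OF iN assms(2)] .
    ultimately show "\<exists>Y \<in> gen_submod n (levi n i) v. \<exists>X \<in> gdeg n i 1. tpair n Y (tau2 n i X) \<noteq> 0" by blast
  qed
  show ?thesis using lw0 part2 by blast
qed


end
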